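(* Let $\mathbb{V}$ be a BIT speciale variety, $A$ a $\mathbb{V}$-algebra and $H$ a non-empty subset of $A$. The following conditions are equivalent, and they imply $0\in H$: (i) for every $a\in A$, every $1\le i\le n$ and all $h_1,\dots,h_n,h'_1,\dots,h'_n\in H$, one has $\alpha_i(\theta(h_1,\dots,h_n,a),\theta(h'_1,\dots,h'_n,a))\in H$; (ii) for every $a\in A$ the $\sim_H$-equivalence class of $a$ equals $\theta(H,\dots,H,a)$, and moreover, for all $a,b\in A$ with $a\sim_H b$, one has $\alpha_i(a,b)\in H$ for every $1\le i\le n$.
   Context: BIT speciale: the algebraic theory of $\mathbb{V}$ contains a constant $0$ and, for some $n\ge1$, binary terms $\alpha_1,\dots,\alpha_n$ and an $(n+1)$-ary term $\theta$ such that $\alpha_i(x,x)=0$ ($1\le i\le n$) and $\theta(\alpha_1(x,y),\dots,\alpha_n(x,y),y)=x$ are identities of $\mathbb{V}$. Notation: $\theta(H,\dots,H,a)=\{\theta(h_1,\dots,h_n,a)\mid h_1,\dots,h_n\in H\}$. For $a,b\in A$, $a\sim_H b$ iff $\theta(H,\dots,H,a)=\theta(H,\dots,H,b)$. *)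

theory Defs
  imports Main
begin

text \<open>An algebra A (carrier set) of a BIT speciale variety, seen through the
interpretations in A of the constant 0, the binary terms alpha_1..alpha_n
(alpha i, 1 \<le> i \<le> n) and the (n+1)-ary term theta (first n arguments
given as a list of length n), satisfying the defining identities on A.\<close>

definition bit_speciale_algebra ::
  "'a set \<Rightarrow> 'a \<Rightarrow> nat \<Rightarrow> (nat \<Rightarrow> 'a \<Rightarrow> 'a \<Rightarrow> 'a) \<Rightarrow> ('a list \<Rightarrow> 'a \<Rightarrow> 'a) \<Rightarrow> bool" where
  "bit_speciale_algebra A z n \<alpha> \<theta> \<longleftrightarrow>
     1 \<le> n \<and> z \<in> A \<and>
     (\<forall>i\<in>{1..n}. \<forall>x\<in>A. \<forall>y\<in>A. \<alpha> i x y \<in> A) \<and>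
     (\<forall>hs a. length hs = n \<longrightarrow> set hs \<subseteq> A \<longrightarrow> a \<in> A \<longrightarrow> \<theta> hs a \<in> A) \<and>
     (\<forall>i\<in>{1..n}. \<forall>x\<in>A. \<alpha> i x x = z) \<and>
     (\<forall>x\<in>A. \<forall>y\<in>A. \<theta> (map (\<lambda>i. \<alpha> i x y) [1..<n+1]) y = x)"

definition theta_set :: "nat \<Rightarrow> ('a list \<Rightarrow> 'a \<Rightarrow> 'a) \<Rightarrow> 'a set \<Rightarrow> 'a \<Rightarrow> 'a set" where
  "theta_set n \<theta> H a = {\<theta> hs a | hs. length hs = n \<and> set hs \<subseteq> H}"

definition sim_H :: "nat \<Rightarrow> ('a list \<Rightarrow> 'a \<Rightarrow> 'a) \<Rightarrow> 'a set \<Rightarrow> 'a \<Rightarrow> 'a \<Rightarrow> bool" where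
  "sim_H n \<theta> H a b \<longleftrightarrow> theta_set n \<theta> H a = theta_set n \<theta> H b"

end

theory Submission
  imports Defs
begin

lemma theta_zero:
  assumes alg: "bit_speciale_algebra A z n \<alpha> \<theta>" and y: "y \<in> A"
  shows "\<theta> (replicate n z) y = y"
proof -
  have "map (\<lambda>i. \<alpha> i y y) [1..<n+1] = map (\<lambda>i. z) [1..<n+1]"
    using alg y unfolding bit_speciale_algebra_def by (intro map_cong) auto
  also have "\<dots> = replicate n z" by (simp add: map_replicate_const)
  finally show ?thesis using alg y unfolding bit_speciale_algebra_def by metis
qed

lemma theta_alpha_in:
  assumes alg: "bit_speciale_algebra A z n \<alpha> \<theta>" and x: "x \<in> A" and y: "y \<in> A"
    and h: "\<forall>i\<in>{1..n}. \<alpha> i x y \<in> H"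
  shows "x \<in> theta_set n \<theta> H y"
proof -
  have "x = \<theta> (map (\<lambda>i. \<alpha> i x y) [1..<n+1]) y"
    using alg x y unfolding bit_speciale_algebra_def by metis
  moreover have "set (map (\<lambda>i. \<alpha> i x y) [1..<n+1]) \<subseteq> H" using h by auto
  ultimately show ?thesis unfolding theta_set_def by force
qed

lemma theta_set_sub:
  assumes alg: "bit_speciale_algebra A z n \<alpha> \<theta>" and HA: "H \<subseteq> A" and y: "y \<in> A"
  shows "theta_set n \<theta> H y \<subseteq> A"
  using alg HA y unfolding bit_speciale_algebra_def theta_set_def by blast

theorem lemma2p4:
  fixes A H :: "'a set" and z :: 'a and n :: nat
    and \<alpha> :: "nat \<Rightarrow> 'a \<Rightarrow> 'a \<Rightarrow> 'a" and \<theta> :: "'a list \<Rightarrow> 'a \<Rightarrow> 'a"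
  assumes alg: "bit_speciale_algebra A z n \<alpha> \<theta>"
    and HA: "H \<subseteq> A" and Hne: "H \<noteq> {}"
  shows "((\<forall>a\<in>A. \<forall>i\<in>{1..n}. \<forall>hs hs'. length hs = n \<longrightarrow> set hs \<subseteq> H \<longrightarrow>
              length hs' = n \<longrightarrow> set hs' \<subseteq> H \<longrightarrow> \<alpha> i (\<theta> hs a) (\<theta> hs' a) \<in> H)
         \<longleftrightarrow>
         ((\<forall>a\<in>A. {b\<in>A. sim_H n \<theta> H a b} = theta_set n \<theta> H a) \<and>
          (\<forall>a\<in>A. \<forall>b\<in>A. sim_H n \<theta> H a b \<longrightarrow> (\<forall>i\<in>{1..n}. \<alpha> i a b \<in> H))))
       \<and>
       ((\<forall>a\<in>A. \<forall>i\<in>{1..n}. \<forall>hs hs'. length hs = n \<longrightarrow> set hs \<subseteq> H \<longrightarrow>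
              length hs' = n \<longrightarrow> set hs' \<subseteq> H \<longrightarrow> \<alpha> i (\<theta> hs a) (\<theta> hs' a) \<in> H)
         \<longrightarrow> z \<in> H)"
  (is "(?I \<longleftrightarrow> ?II) \<and> (?I \<longrightarrow> z \<in> H)")
proof -
  have n1: "1 \<le> n" and thA: "\<And>hs a. length hs = n \<Longrightarrow> set hs \<subseteq> A \<Longrightarrow> a \<in> A \<Longrightarrow> \<theta> hs a \<in> A"
    and aa: "\<And>i x. i \<in> {1..n} \<Longrightarrow> x \<in> A \<Longrightarrow> \<alpha> i x x = z"
    using alg unfolding bit_speciale_algebra_def by auto
  have Iz: "z \<in> H" if I: ?I
  proof -
    obtain h where h: "h \<in> H" using Hne by blast
    have hA: "h \<in> A" using h HA by blast
    let ?hs = "replicate n h"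
    have "\<alpha> 1 (\<theta> ?hs h) (\<theta> ?hs h) \<in> H" using I hA h n1 by auto
    moreover have "\<theta> ?hs h \<in> A" by (rule thA) (use hA in auto)
    ultimately show ?thesis using aa n1 by simp
  qed
  have mem: "x \<in> theta_set n \<theta> H y \<longleftrightarrow> x \<in> A \<and> (\<forall>i\<in>{1..n}. \<alpha> i x y \<in> H)"
    if I: ?I and y: "y \<in> A" for x y
  proof
    assume x: "x \<in> theta_set n \<theta> H y"
    then obtain hs where hs: "length hs = n" "set hs \<subseteq> H" "x = \<theta> hs y"
      unfolding theta_set_def by blast
    have "x \<in> A" using theta_set_sub[OF alg HA y] x by blast
    moreover have "\<alpha> i x y \<in> H" if "i \<in> {1..n}" for i
    proof -
      have "\<alpha> i (\<theta> hs y) (\<theta> (replicate n z) y) \<in> H"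
        using I y that hs Iz[OF I] by auto
      then show ?thesis using theta_zero[OF alg y] hs by simp
    qed
    ultimately show "x \<in> A \<and> (\<forall>i\<in>{1..n}. \<alpha> i x y \<in> H)" by blast
  next
    assume "x \<in> A \<and> (\<forall>i\<in>{1..n}. \<alpha> i x y \<in> H)"
    then show "x \<in> theta_set n \<theta> H y" using theta_alpha_in[OF alg _ y] by blast
  qed
  have pair: "\<alpha> i x y \<in> H" if I: ?I and a: "a \<in> A" and i: "i \<in> {1..n}"
    and x: "x \<in> theta_set n \<theta> H a" and y: "y \<in> theta_set n \<theta> H a" for a i x y
  proof -
    obtain hs where hs: "length hs = n" "set hs \<subseteq> H" "x = \<theta> hs a"
      using x unfolding theta_set_def by blast
    obtain hs' where hs': "length hs' = n" "set hs' \<subseteq> H" "y = \<theta> hs' a"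
      using y unfolding theta_set_def by blast
    show ?thesis using I a i hs hs' by auto
  qed
  have self: "a \<in> theta_set n \<theta> H a" if I: ?I and a: "a \<in> A" for a
    using theta_alpha_in[OF alg a a] aa a Iz[OF I] by auto
  have same: "theta_set n \<theta> H b = theta_set n \<theta> H a"
    if I: ?I and a: "a \<in> A" and b: "b \<in> theta_set n \<theta> H a" for a b
  proof -
    have bA: "b \<in> A" using theta_set_sub[OF alg HA a] b by blast
    have aB: "a \<in> theta_set n \<theta> H b"
      using mem[OF I bA] a pair[OF I a _ self[OF I a] b] by blast
    show ?thesis
    proof
      show "theta_set n \<theta> H b \<subseteq> theta_set n \<theta> H a"
      proof
        fix c assume c: "c \<in> theta_set n \<theta> H b"
        have cA: "c \<in> A" using theta_set_sub[OF alg HA bA] c by blast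
        show "c \<in> theta_set n \<theta> H a"
          using mem[OF I a] cA pair[OF I bA _ c aB] by blast
      qed
    next
      show "theta_set n \<theta> H a \<subseteq> theta_set n \<theta> H b"
      proof
        fix c assume c: "c \<in> theta_set n \<theta> H a"
        have cA: "c \<in> A" using theta_set_sub[OF alg HA a] c by blast
        show "c \<in> theta_set n \<theta> H b"
          using mem[OF I bA] cA pair[OF I a _ c b] by blast
      qed
    qed
  qed
  have "?I \<Longrightarrow> ?II"
  proof -
    assume I: ?I
    have p1: "\<forall>a\<in>A. {b\<in>A. sim_H n \<theta> H a b} = theta_set n \<theta> H a"
    proof (intro ballI equalityI subsetI)
      fix a b assume a: "a \<in> A" and b: "b \<in> {b\<in>A. sim_H n \<theta> H a b}"
      then show "b \<in> theta_set n \<theta> H a" using self[OF I, of b] unfolding sim_H_def by auto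
    next
      fix a b assume a: "a \<in> A" and b: "b \<in> theta_set n \<theta> H a"
      then show "b \<in> {b\<in>A. sim_H n \<theta> H a b}"
        using same[OF I a b] theta_set_sub[OF alg HA a] unfolding sim_H_def by auto
    qed
    have p2: "\<forall>a\<in>A. \<forall>b\<in>A. sim_H n \<theta> H a b \<longrightarrow> (\<forall>i\<in>{1..n}. \<alpha> i a b \<in> H)"
    proof (intro ballI impI)
      fix a b i assume a: "a \<in> A" and b: "b \<in> A" and s: "sim_H n \<theta> H a b" and i: "i \<in> {1..n}"
      have "a \<in> theta_set n \<theta> H b" using self[OF I a] s unfolding sim_H_def by simp
      then show "\<alpha> i a b \<in> H" using pair[OF I b i _ self[OF I b]] by blast
    qed
    show ?II using p1 p2 by blast
  qed
  moreover have "?II \<Longrightarrow> ?I"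
  proof -
    assume II: ?II
    show ?I
    proof (intro ballI allI impI)
      fix a i hs hs' assume a: "a \<in> A" and i: "i \<in> {1..n}" and hs: "length hs = n" "set hs \<subseteq> H"
        and hs': "length hs' = n" "set hs' \<subseteq> H"
      have x: "\<theta> hs a \<in> theta_set n \<theta> H a" using hs unfolding theta_set_def by blast
      have y: "\<theta> hs' a \<in> theta_set n \<theta> H a" using hs' unfolding theta_set_def by blast
      have xs: "\<theta> hs a \<in> A" "sim_H n \<theta> H a (\<theta> hs a)" using II a x by blast+
      have ys: "\<theta> hs' a \<in> A" "sim_H n \<theta> H a (\<theta> hs' a)" using II a y by blast+
      have "sim_H n \<theta> H (\<theta> hs a) (\<theta> hs' a)" using xs ys unfolding sim_H_def by simp
      then show "\<alpha> i (\<theta> hs a) (\<theta> hs' a) \<in> H" using II xs ys i by blast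
    qed
  qed
  ultimately show ?thesis using Iz by blast
qed

end
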